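(* Under the partial cost model, for every positive integer $k$ there is a request sequence $\sigma$ on a list of two items with $\mathrm{TS}(\sigma)=\mathrm{MTFO}(\sigma)=\mathrm{MTFE}(\sigma)=10k$ and $\mathrm{OPT}(\sigma)\le 6k$; in particular each of TS, MTFO and MTFE has cost at least $\frac{5}{3}\mathrm{OPT}(\sigma)$ on these sequences. (Hence the bound $\frac53$ of the best of the three algorithms is tight in the partial cost model.)
   Context: Static list update: serving a request to the item at position $i$ costs $i-1$ (partial cost model); the accessed item may be moved closer to the front for free; two adjacent items may be swapped at cost $1$. $A(\sigma)$ is the total cost of algorithm $A$ and $\mathrm{OPT}(\sigma)$ the minimum cost of any offline algorithm from the same initial list. MTFO moves a requested item to the front on the 1st, 3rd, 5th, ... request to that item; MTFE on the 2nd, 4th, 6th, ... request; otherwise they leave it in place. TS (Timestamp): on a request to item $x$, if $x$ has been requested before and some item preceding $x$ has been requested at most once since the previous request to $x$, then $x$ is moved to immediately in front of the frontmost such item; otherwise nothing moves. These three algorithms make no paid exchanges. *)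

theory Defs
  imports Main
begin

(* Position of an item in a list, 0-based.  Under the partial cost model,
   serving a request to the item at (1-based) position i costs i-1, i.e.
   exactly the 0-based position. *)
fun pos :: "'a list \<Rightarrow> 'a \<Rightarrow> nat" where
  "pos [] x = 0"
| "pos (y # ys) x = (if y = x then 0 else Suc (pos ys x))"

definition move_to :: "nat \<Rightarrow> 'a \<Rightarrow> 'a list \<Rightarrow> 'a list" where
  "move_to j x s = take j (remove1 x s) @ x # drop j (remove1 x s)"

definition swap_adj :: "nat \<Rightarrow> 'a list \<Rightarrow> 'a list" where
  "swap_adj i s = (if Suc i < length s then s[i := s ! Suc i, Suc i := s ! i] else s)"

definition swaps :: "nat list \<Rightarrow> 'a list \<Rightarrow> 'a list" where
  "swaps sw s = fold swap_adj sw s"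

(* offline executions: before each request any number of paid exchanges
   (cost 1 each), then the access (cost = 0-based position), then a free
   move of the accessed item closer to the front (or no move: j = position) *)
inductive offline_exec :: "'a list \<Rightarrow> 'a list \<Rightarrow> nat \<Rightarrow> bool" where
  Nil: "offline_exec s [] 0"
| Cons: "\<lbrakk> s' = swaps sw s; j \<le> pos s' x;
           offline_exec (move_to j x s') rs c \<rbrakk>
         \<Longrightarrow> offline_exec s (x # rs) (length sw + pos s' x + c)"

definition OPT :: "'a list \<Rightarrow> 'a list \<Rightarrow> nat" where
  "OPT s0 \<sigma> = (LEAST c. offline_exec s0 \<sigma> c)"

(* online algorithms without paid exchanges: step function taking the
   history of previous requests, the current list and the current request,
   and returning the new list *)
fun online_cost :: "('a list \<Rightarrow> 'a list \<Rightarrow> 'a \<Rightarrow> 'a list)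
                     \<Rightarrow> 'a list \<Rightarrow> 'a list \<Rightarrow> 'a list \<Rightarrow> nat" where
  "online_cost A h s [] = 0"
| "online_cost A h s (x # rs) = pos s x + online_cost A (h @ [x]) (A h s x) rs"

(* MTFO: move to front on the 1st, 3rd, 5th, ... request to x,
   i.e. when the number of previous requests to x is even *)
definition mtfo_step :: "'a list \<Rightarrow> 'a list \<Rightarrow> 'a \<Rightarrow> 'a list" where
  "mtfo_step h s x = (if even (count_list h x) then move_to 0 x s else s)"

(* MTFE: move to front on the 2nd, 4th, 6th, ... request to x *)
definition mtfe_step :: "'a list \<Rightarrow> 'a list \<Rightarrow> 'a \<Rightarrow> 'a list" where
  "mtfe_step h s x = (if odd (count_list h x) then move_to 0 x s else s)"

(* TS: if x was requested before, consider the items preceding x that were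
   requested at most once since the previous request to x; if there is any,
   move x to immediately in front of the frontmost such item *)
definition ts_step :: "'a list \<Rightarrow> 'a list \<Rightarrow> 'a \<Rightarrow> 'a list" where
  "ts_step h s x =
     (if x \<notin> set h then s
      else let seg = rev (takeWhile (\<lambda>y. y \<noteq> x) (rev h));
               cands = filter (\<lambda>y. count_list seg y \<le> 1) (take (pos s x) s)
           in if cands = [] then s else move_to (pos s (hd cands)) x s)"

definition MTFO :: "'a list \<Rightarrow> 'a list \<Rightarrow> nat" where
  "MTFO s0 \<sigma> = online_cost mtfo_step [] s0 \<sigma>"

definition MTFE :: "'a list \<Rightarrow> 'a list \<Rightarrow> nat" where
  "MTFE s0 \<sigma> = online_cost mtfe_step [] s0 \<sigma>"

definition TS :: "'a list \<Rightarrow> 'a list \<Rightarrow> nat" where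
  "TS s0 \<sigma> = online_cost ts_step [] s0 \<sigma>"

end

theory Submission
  imports Defs
begin

definition blk :: "'a \<Rightarrow> 'a \<Rightarrow> 'a list" where
  "blk a b = [a,b,a,a,a,b,a,b,a,b,a,b,a,b,a,a]"

lemma offline_static:
  assumes "a \<noteq> b" "set \<sigma> \<subseteq> {a, b}"
  shows "offline_exec [a, b] \<sigma> (count_list \<sigma> b)"
  using assms(2)
proof (induction \<sigma>)
  case Nil
  then show ?case by (simp add: offline_exec.Nil)
next
  case (Cons x rs)
  have x: "x = a \<or> x = b" using Cons.prems by auto
  have rs: "offline_exec [a,b] rs (count_list rs b)" using Cons by auto
  have m: "move_to (pos [a,b] x) x [a,b] = [a,b]"
    using x assms(1) by (auto simp: move_to_def)
  have "offline_exec [a,b] (x # rs) (length ([]::nat list) + pos [a,b] x + count_list rs b)"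
  proof (rule offline_exec.Cons[where sw="[]" and j="pos [a,b] x"])
    show "[a,b] = swaps [] [a,b]" by (simp add: swaps_def)
    show "pos [a,b] x \<le> pos [a,b] x" by simp
    show "offline_exec (move_to (pos [a,b] x) x [a,b]) rs (count_list rs b)"
      unfolding m by (rule rs)
  qed
  moreover have "pos [a,b] x + count_list rs b = count_list (x # rs) b" using x assms(1) by auto
  ultimately show ?case by simp
qed

lemma mtfo_blk:
  assumes "a \<noteq> b" "even (count_list h a)" "even (count_list h b)"
  shows "online_cost mtfo_step h [a, b] (blk a b @ rest) = 10 + online_cost mtfo_step (h @ blk a b) [a, b] rest"
  using assms by (simp add: blk_def mtfo_step_def move_to_def)

lemma mtfe_blk:
  assumes "a \<noteq> b" "even (count_list h a)" "even (count_list h b)"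
  shows "online_cost mtfe_step h [a, b] (blk a b @ rest) = 10 + online_cost mtfe_step (h @ blk a b) [a, b] rest"
  using assms by (simp add: blk_def mtfe_step_def move_to_def)

lemma ts_blk1:
  assumes "a \<noteq> b"
  shows "online_cost ts_step (g @ blk a b) [a, b] (blk a b @ rest) = 10 + online_cost ts_step (g @ blk a b @ blk a b) [a, b] rest"
  using assms by (simp add: blk_def ts_step_def move_to_def)

lemma ts_blk0:
  assumes "a \<noteq> b"
  shows "online_cost ts_step [] [a, b] (blk a b @ rest) = 10 + online_cost ts_step (blk a b) [a, b] rest"
  using assms by (simp add: blk_def ts_step_def move_to_def)

lemma blk_counts: "a \<noteq> b \<Longrightarrow> count_list (blk a b) a = 10 \<and> count_list (blk a b) b = 6"
  by (simp add: blk_def)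

lemma mtfo_rep:
  assumes "a \<noteq> b"
  shows "even (count_list h a) \<Longrightarrow> even (count_list h b) \<Longrightarrow>
    online_cost mtfo_step h [a, b] (concat (replicate k (blk a b))) = 10 * k"
proof (induction k arbitrary: h)
  case 0 then show ?case by simp
next
  case (Suc k)
  have "online_cost mtfo_step (h @ blk a b) [a, b] (concat (replicate k (blk a b))) = 10 * k"
    using Suc blk_counts[OF assms] by simp
  then show ?case using mtfo_blk[OF assms Suc.prems] by simp
qed

lemma mtfe_rep:
  assumes "a \<noteq> b"
  shows "even (count_list h a) \<Longrightarrow> even (count_list h b) \<Longrightarrow>
    online_cost mtfe_step h [a, b] (concat (replicate k (blk a b))) = 10 * k"
proof (induction k arbitrary: h)
  case 0 then show ?case by simp
next
  case (Suc k)
  have "online_cost mtfe_step (h @ blk a b) [a, b] (concat (replicate k (blk a b))) = 10 * k"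
    using Suc blk_counts[OF assms] by simp
  then show ?case using mtfe_blk[OF assms Suc.prems] by simp
qed

lemma ts_rep:
  assumes "a \<noteq> b"
  shows "online_cost ts_step (g @ blk a b) [a, b] (concat (replicate k (blk a b))) = 10 * k"
proof (induction k arbitrary: g)
  case 0 then show ?case by simp
next
  case (Suc k)
  have "online_cost ts_step ((g @ blk a b) @ blk a b) [a, b] (concat (replicate k (blk a b))) = 10 * k"
    using Suc by blast
  then show ?case using ts_blk1[OF assms, of g] by simp
qed

lemma ts_rep0:
  assumes "a \<noteq> b"
  shows "online_cost ts_step [] [a, b] (concat (replicate k (blk a b))) = 10 * k"
proof (cases k)
  case 0 then show ?thesis by simp
next
  case (Suc k')
  have "online_cost ts_step ([] @ blk a b) [a, b] (concat (replicate k' (blk a b))) = 10 * k'"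
    by (rule ts_rep[OF assms])
  then show ?thesis using ts_blk0[OF assms] Suc by simp
qed

lemma rep_count: "a \<noteq> b \<Longrightarrow> count_list (concat (replicate k (blk a b))) b = 6 * k"
  by (induction k) (simp_all add: blk_counts)

lemma rep_set: "set (concat (replicate k (blk a b))) \<subseteq> {a, b}"
  by (induction k) (auto simp: blk_def)

theorem theorem4:
  fixes a b :: 'a and k :: nat
  assumes "a \<noteq> b" and "k > 0"
  shows "\<exists>\<sigma>. set \<sigma> \<subseteq> {a, b}
            \<and> TS [a, b] \<sigma> = 10 * k \<and> MTFO [a, b] \<sigma> = 10 * k \<and> MTFE [a, b] \<sigma> = 10 * k
            \<and> OPT [a, b] \<sigma> \<le> 6 * k
            \<and> 5 * OPT [a, b] \<sigma> \<le> 3 * TS [a, b] \<sigma>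
            \<and> 5 * OPT [a, b] \<sigma> \<le> 3 * MTFO [a, b] \<sigma>
            \<and> 5 * OPT [a, b] \<sigma> \<le> 3 * MTFE [a, b] \<sigma>"
proof -
  let ?s = "concat (replicate k (blk a b))"
  have ts: "TS [a, b] ?s = 10 * k" unfolding TS_def by (rule ts_rep0[OF assms(1)])
  have mo: "MTFO [a, b] ?s = 10 * k" unfolding MTFO_def using mtfo_rep[OF assms(1)] by simp
  have me: "MTFE [a, b] ?s = 10 * k" unfolding MTFE_def using mtfe_rep[OF assms(1)] by simp
  have "offline_exec [a, b] ?s (6 * k)"
    using offline_static[OF assms(1) rep_set] rep_count[OF assms(1)] by metis
  then have op: "OPT [a, b] ?s \<le> 6 * k" unfolding OPT_def by (rule Least_le)
  show ?thesis using ts mo me op rep_set[of k a b] by (intro exI[of _ ?s]) simp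
qed

end
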